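(* For every integer $r_3\geq 0$ there exists an integer $r_2^*\geq 0$ such that (1) for every integer $r_2\geq r_2^*$ there exists a graph with parameters $(r_2,r_3)$, and (2) for every integer $0\le r_2<r_2^*$ there exists no graph with parameters $(r_2,r_3)$.
   Context: All graphs are finite, simple and undirected. The $K_3$-degree of a vertex $v$ is the number of triangles containing $v$. A graph $G$ has parameters $(r_2,r_3)$ if every vertex has degree $r_2$ and every vertex has $K_3$-degree $r_3$. *)

theory Defs
  imports Main
begin

text \<open>A finite simple undirected graph with vertex set V (vertices are natural numbers,
  which is no loss of generality up to isomorphism) and a symmetric irreflexive
  adjacency relation E supported on V.\<close>
definition simple_graph :: "nat set \<Rightarrow> (nat \<Rightarrow> nat \<Rightarrow> bool) \<Rightarrow> bool" where
  "simple_graph V E \<longleftrightarrow> finite V \<and> (\<forall>u v. E u v \<longrightarrow> u \<in> V \<and> v \<in> V)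
     \<and> (\<forall>u v. E u v \<longrightarrow> E v u) \<and> (\<forall>v. \<not> E v v)"

definition degree :: "nat set \<Rightarrow> (nat \<Rightarrow> nat \<Rightarrow> bool) \<Rightarrow> nat \<Rightarrow> nat" where
  "degree V E v = card {u \<in> V. E v u}"

definition triangles :: "nat set \<Rightarrow> (nat \<Rightarrow> nat \<Rightarrow> bool) \<Rightarrow> nat set set" where
  "triangles V E = {T. T \<subseteq> V \<and> card T = 3 \<and> (\<forall>x\<in>T. \<forall>y\<in>T. x \<noteq> y \<longrightarrow> E x y)}"

definition k3_degree :: "nat set \<Rightarrow> (nat \<Rightarrow> nat \<Rightarrow> bool) \<Rightarrow> nat \<Rightarrow> nat" where
  "k3_degree V E v = card {T \<in> triangles V E. v \<in> T}"

definition has_parameters :: "nat set \<Rightarrow> (nat \<Rightarrow> nat \<Rightarrow> bool) \<Rightarrow> nat \<Rightarrow> nat \<Rightarrow> bool" where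
  "has_parameters V E r2 r3 \<longleftrightarrow> simple_graph V E \<and> V \<noteq> {} \<and>
     (\<forall>v\<in>V. degree V E v = r2 \<and> k3_degree V E v = r3)"

end

theory Submission
  imports Defs "HOL-Library.Nat_Bijection"
begin

definition sg :: "'a set \<Rightarrow> ('a \<Rightarrow> 'a \<Rightarrow> bool) \<Rightarrow> bool" where
  "sg V E \<longleftrightarrow> finite V \<and> (\<forall>u v. E u v \<longrightarrow> u \<in> V \<and> v \<in> V)
     \<and> (\<forall>u v. E u v \<longrightarrow> E v u) \<and> (\<forall>v. \<not> E v v)"

definition nbr :: "'a set \<Rightarrow> ('a \<Rightarrow> 'a \<Rightarrow> bool) \<Rightarrow> 'a \<Rightarrow> 'a set" where
  "nbr V E v = {u \<in> V. E v u}"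

definition tri :: "'a set \<Rightarrow> ('a \<Rightarrow> 'a \<Rightarrow> bool) \<Rightarrow> 'a set set" where
  "tri V E = {T. T \<subseteq> V \<and> card T = 3 \<and> (\<forall>x\<in>T. \<forall>y\<in>T. x \<noteq> y \<longrightarrow> E x y)}"

definition gp :: "'a set \<Rightarrow> ('a \<Rightarrow> 'a \<Rightarrow> bool) \<Rightarrow> nat \<Rightarrow> nat \<Rightarrow> bool" where
  "gp V E r2 r3 \<longleftrightarrow> sg V E \<and> V \<noteq> {} \<and>
     (\<forall>v\<in>V. card (nbr V E v) = r2 \<and> card {T \<in> tri V E. v \<in> T} = r3)"

lemma hp_gp: "has_parameters V E r2 r3 = gp V E r2 r3"
  unfolding has_parameters_def gp_def simple_graph_def sg_def degree_def nbr_def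
    k3_degree_def triangles_def tri_def by simp

definition pE :: "'a set \<Rightarrow> 'b set \<Rightarrow> ('a \<Rightarrow> 'a \<Rightarrow> bool) \<Rightarrow> ('b \<Rightarrow> 'b \<Rightarrow> bool) \<Rightarrow> 'a \<times> 'b \<Rightarrow> 'a \<times> 'b \<Rightarrow> bool" where
  "pE V W E F a b \<longleftrightarrow> a \<in> V \<times> W \<and> b \<in> V \<times> W \<and> ((fst a = fst b \<and> F (snd a) (snd b)) \<or> (snd a = snd b \<and> E (fst a) (fst b)))"

lemma nbr_prod:
  assumes "sg V E" "sg W F" "u \<in> V" "x \<in> W"
  shows "nbr (V \<times> W) (pE V W E F) (u,x) = (\<lambda>v. (v,x)) ` nbr V E u \<union> (\<lambda>y. (u,y)) ` nbr W F x"
  using assms unfolding nbr_def pE_def sg_def by auto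

lemma tri_prod:
  assumes G: "sg V E" and H: "sg W F" and ux: "u \<in> V" "x \<in> W"
  shows "{T \<in> tri (V \<times> W) (pE V W E F). (u,x) \<in> T} =
     (\<lambda>T. T \<times> {x}) ` {T \<in> tri V E. u \<in> T} \<union> (\<lambda>T. {u} \<times> T) ` {T \<in> tri W F. x \<in> T}"
proof (rule set_eqI, rule iffI)
  fix T assume "T \<in> {T \<in> tri (V \<times> W) (pE V W E F). (u,x) \<in> T}"
  hence sub: "T \<subseteq> V \<times> W" and c3: "card T = 3" and adj: "\<And>p q. p \<in> T \<Longrightarrow> q \<in> T \<Longrightarrow> p \<noteq> q \<Longrightarrow> pE V W E F p q"
    and uxT: "(u,x) \<in> T" by (auto simp: tri_def)
  show "T \<in> (\<lambda>T. T \<times> {x}) ` {T \<in> tri V E. u \<in> T} \<union> (\<lambda>T. {u} \<times> T) ` {T \<in> tri W F. x \<in> T}"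
  proof (cases "\<forall>p\<in>T. snd p = x")
    case True
    have eq: "T = fst ` T \<times> {x}" using True by force
    have inj: "inj_on fst T" using True by (intro inj_onI) (metis prod.collapse)
    have "fst ` T \<in> tri V E"
      unfolding tri_def
    proof (intro CollectI conjI ballI impI)
      show "fst ` T \<subseteq> V" using sub by auto
      show "card (fst ` T) = 3" using card_image[OF inj] c3 by simp
      fix a b assume "a \<in> fst ` T" "b \<in> fst ` T" "a \<noteq> b"
      then obtain p q where "p \<in> T" "q \<in> T" "a = fst p" "b = fst q" "p \<noteq> q" by auto
      with adj[of p q] True show "E a b" unfolding pE_def by (auto simp: prod_eq_iff)
    qed
    moreover have "u \<in> fst ` T" using uxT by force
    ultimately show ?thesis using eq by blast
  next
    case False
    then obtain p where pT: "p \<in> T" and px: "snd p \<noteq> x" by auto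
    have "p \<noteq> (u,x)" using px by auto
    hence pu: "fst p = u" using adj[OF uxT pT] px unfolding pE_def by auto
    have allu: "\<forall>q\<in>T. fst q = u"
    proof
      fix q assume qT: "q \<in> T"
      show "fst q = u"
      proof (rule ccontr)
        assume qu: "fst q \<noteq> u"
        hence "q \<noteq> (u,x)" "q \<noteq> p" using pu by auto
        hence "snd q = x" "snd q = snd p" using adj[OF uxT qT] adj[OF qT pT] qu pu
          unfolding pE_def by auto
        thus False using px by simp
      qed
    qed
    have eq: "T = {u} \<times> snd ` T" using allu by force
    have inj: "inj_on snd T" using allu by (intro inj_onI) (metis prod.collapse)
    have "snd ` T \<in> tri W F"
      unfolding tri_def
    proof (intro CollectI conjI ballI impI)
      show "snd ` T \<subseteq> W" using sub by auto
      show "card (snd ` T) = 3" using card_image[OF inj] c3 by simp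
      fix a b assume "a \<in> snd ` T" "b \<in> snd ` T" "a \<noteq> b"
      then obtain p q where "p \<in> T" "q \<in> T" "a = snd p" "b = snd q" "p \<noteq> q" by auto
      with adj[of p q] allu show "F a b" unfolding pE_def by (auto simp: prod_eq_iff)
    qed
    moreover have "x \<in> snd ` T" using uxT by force
    ultimately show ?thesis using eq by blast
  qed
next
  fix S assume "S \<in> (\<lambda>T. T \<times> {x}) ` {T \<in> tri V E. u \<in> T} \<union> (\<lambda>T. {u} \<times> T) ` {T \<in> tri W F. x \<in> T}"
  thus "S \<in> {T \<in> tri (V \<times> W) (pE V W E F). (u,x) \<in> T}"
  proof
    assume "S \<in> (\<lambda>T. T \<times> {x}) ` {T \<in> tri V E. u \<in> T}"
    then obtain T where T: "T \<in> tri V E" "u \<in> T" and S: "S = T \<times> {x}" by auto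
    have "card S = 3" using T S by (simp add: tri_def card_cartesian_product)
    thus ?thesis using T S ux unfolding tri_def pE_def by auto
  next
    assume "S \<in> (\<lambda>T. {u} \<times> T) ` {T \<in> tri W F. x \<in> T}"
    then obtain T where T: "T \<in> tri W F" "x \<in> T" and S: "S = {u} \<times> T" by auto
    have "card S = 3" using T S by (simp add: tri_def card_cartesian_product)
    thus ?thesis using T S ux unfolding tri_def pE_def by auto
  qed
qed

lemma fin_tri: "finite V \<Longrightarrow> finite {T \<in> tri V E. u \<in> T}"
  by (rule finite_subset[of _ "Pow V"]) (auto simp: tri_def)

lemma gp_prod:
  assumes G: "gp V E a b" and H: "gp W F c d"
  shows "gp (V \<times> W) (pE V W E F) (a + c) (b + d)"
  unfolding gp_def
proof (intro conjI ballI)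
  have sG: "sg V E" and sH: "sg W F" using G H by (auto simp: gp_def)
  show "sg (V \<times> W) (pE V W E F)" unfolding sg_def
  proof (intro conjI allI impI)
    show "finite (V \<times> W)" using sG sH by (simp add: sg_def)
    fix a b assume "pE V W E F a b"
    thus "a \<in> V \<times> W" "b \<in> V \<times> W" unfolding pE_def by auto
    have sE: "\<And>u v. E u v \<Longrightarrow> E v u" and sF: "\<And>u v. F u v \<Longrightarrow> F v u"
      using sG sH unfolding sg_def by blast+
    show "pE V W E F b a" using \<open>pE V W E F a b\<close> unfolding pE_def by (metis sE sF)
  next
    fix a show "\<not> pE V W E F a a" using sG sH unfolding pE_def sg_def by auto
  qed
  show "V \<times> W \<noteq> {}" using G H by (auto simp: gp_def)
  fix p assume "p \<in> V \<times> W"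
  then obtain u x where p: "p = (u,x)" and ux: "u \<in> V" "x \<in> W" by auto
  have fV: "finite V" and fW: "finite W" using sG sH by (auto simp: sg_def)
  have "card (nbr (V \<times> W) (pE V W E F) p) = card ((\<lambda>v. (v,x)) ` nbr V E u) + card ((\<lambda>y. (u,y)) ` nbr W F x)"
    unfolding p nbr_prod[OF sG sH ux]
    apply (rule card_Un_disjoint)
    using fV fW sG sH by (auto simp: nbr_def sg_def)
  also have "\<dots> = a + c"
    using G H ux by (simp add: card_image inj_on_def gp_def)
  finally show "card (nbr (V \<times> W) (pE V W E F) p) = a + c" .
  have i1: "inj_on (\<lambda>T. T \<times> {x}) X" for X :: "'a set set"
    by (intro inj_onI) (simp add: Times_eq_cancel2)
  have i2: "inj_on (\<lambda>T. {u} \<times> T) X" for X :: "'b set set"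
    by (intro inj_onI) (metis snd_image_times insert_not_empty)
  have disj: "(\<lambda>T. T \<times> {x}) ` {T \<in> tri V E. u \<in> T} \<inter> (\<lambda>T. {u} \<times> T) ` {T \<in> tri W F. x \<in> T} = {}"
  proof (rule ccontr)
    assume "\<not> ?thesis"
    then obtain T T' where "T \<in> tri V E" "u \<in> T" "T \<times> {x} = {u} \<times> T'" "x \<in> T'" by blast
    hence "T = {u}" by blast
    with \<open>T \<in> tri V E\<close> show False by (simp add: tri_def)
  qed
  have "card {T \<in> tri (V \<times> W) (pE V W E F). p \<in> T} =
     card ((\<lambda>T. T \<times> {x}) ` {T \<in> tri V E. u \<in> T}) + card ((\<lambda>T. {u} \<times> T) ` {T \<in> tri W F. x \<in> T})"
    unfolding p tri_prod[OF sG sH ux]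
    by (rule card_Un_disjoint) (use fin_tri[OF fV] fin_tri[OF fW] disj in auto)
  also have "\<dots> = b + d"
    using G H ux by (simp add: card_image[OF i1] card_image[OF i2] gp_def)
  finally show "card {T \<in> tri (V \<times> W) (pE V W E F). p \<in> T} = b + d" .
qed

definition iE :: "('a \<Rightarrow> 'b) \<Rightarrow> 'a set \<Rightarrow> ('a \<Rightarrow> 'a \<Rightarrow> bool) \<Rightarrow> 'b \<Rightarrow> 'b \<Rightarrow> bool" where
  "iE f V E a b \<longleftrightarrow> (\<exists>u\<in>V. \<exists>v\<in>V. a = f u \<and> b = f v \<and> E u v)"

lemma gp_iso:
  assumes G: "gp V E r2 r3" and inj: "inj_on f V"
  shows "gp (f ` V) (iE f V E) r2 r3"
  unfolding gp_def
proof (intro conjI ballI)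
  have sG: "sg V E" using G by (simp add: gp_def)
  have iE: "u \<in> V \<Longrightarrow> v \<in> V \<Longrightarrow> iE f V E (f u) (f v) = E u v" for u v
    using inj unfolding iE_def inj_on_def by metis
  show "sg (f ` V) (iE f V E)" unfolding sg_def
  proof (intro conjI allI impI)
    show "finite (f ` V)" using sG by (simp add: sg_def)
    fix a b assume "iE f V E a b"
    then obtain u v where "u \<in> V" "v \<in> V" "a = f u" "b = f v" "E u v" by (auto simp: iE_def)
    thus "a \<in> f ` V" "b \<in> f ` V" using sG by (auto simp: sg_def iE_def)
    show "iE f V E b a" using sG \<open>u \<in> V\<close> \<open>v \<in> V\<close> \<open>a = f u\<close> \<open>b = f v\<close> \<open>E u v\<close>
      unfolding sg_def iE_def by blast
  next
    fix a show "\<not> iE f V E a a" using sG inj unfolding sg_def iE_def inj_on_def by metis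
  qed
  show "f ` V \<noteq> {}" using G by (simp add: gp_def)
  fix w assume "w \<in> f ` V"
  then obtain v where w: "w = f v" and v: "v \<in> V" by auto
  have "nbr (f ` V) (iE f V E) w = f ` nbr V E v"
    using iE v unfolding w nbr_def by auto
  moreover have "inj_on f (nbr V E v)" using inj by (rule inj_on_subset) (auto simp: nbr_def)
  ultimately show "card (nbr (f ` V) (iE f V E) w) = r2"
    using G v by (simp add: card_image gp_def)
  have injI: "inj_on ((`) f) (Pow V)" using inj by (rule inj_on_image_Pow)
  have "{T \<in> tri (f ` V) (iE f V E). w \<in> T} = (`) f ` {T \<in> tri V E. v \<in> T}"
  proof (rule set_eqI, rule iffI)
    fix S assume S: "S \<in> {T \<in> tri (f ` V) (iE f V E). w \<in> T}"
    define T where "T = {u \<in> V. f u \<in> S}"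
    have TV: "T \<subseteq> V" by (auto simp: T_def)
    have ST: "S = f ` T" using S by (auto simp: T_def tri_def)
    have injT: "inj_on f T" using inj TV by (rule inj_on_subset)
    have "T \<in> tri V E" unfolding tri_def
    proof (intro CollectI conjI ballI impI TV)
      show "card T = 3" using S ST card_image[OF injT] by (simp add: tri_def)
      fix a b assume "a \<in> T" "b \<in> T" "a \<noteq> b"
      moreover hence "f a \<noteq> f b" using injT by (meson inj_on_eq_iff)
      ultimately have "iE f V E (f a) (f b)" using S unfolding T_def tri_def by auto
      thus "E a b" using iE \<open>a \<in> T\<close> \<open>b \<in> T\<close> TV by auto
    qed
    moreover have "v \<in> T" using S v w by (auto simp: T_def)
    ultimately show "S \<in> (`) f ` {T \<in> tri V E. v \<in> T}" using ST by blast
  next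
    fix S assume "S \<in> (`) f ` {T \<in> tri V E. v \<in> T}"
    then obtain T where T: "T \<in> tri V E" "v \<in> T" and S: "S = f ` T" by auto
    have TV: "T \<subseteq> V" using T by (simp add: tri_def)
    have injT: "inj_on f T" using inj TV by (rule inj_on_subset)
    have "card S = 3" using T S card_image[OF injT] by (simp add: tri_def)
    moreover have "\<forall>a\<in>S. \<forall>b\<in>S. a \<noteq> b \<longrightarrow> iE f V E a b"
    proof (intro ballI impI)
      fix a b assume "a \<in> S" "b \<in> S" "a \<noteq> b"
      then obtain a' b' where "a' \<in> T" "b' \<in> T" "a = f a'" "b = f b'" using S by auto
      moreover hence "a' \<noteq> b'" using \<open>a \<noteq> b\<close> by auto
      ultimately show "iE f V E a b" using T TV unfolding tri_def iE_def by blast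
    qed
    ultimately show "S \<in> {T \<in> tri (f ` V) (iE f V E). w \<in> T}"
      using S TV T w unfolding tri_def by auto
  qed
  moreover have "inj_on ((`) f) {T \<in> tri V E. v \<in> T}"
    using injI by (rule inj_on_subset) (auto simp: tri_def)
  ultimately show "card {T \<in> tri (f ` V) (iE f V E). w \<in> T} = r3"
    using G v by (simp add: card_image gp_def)
qed

definition P :: "nat \<Rightarrow> nat \<Rightarrow> bool" where
  "P r2 r3 \<longleftrightarrow> (\<exists>V E. has_parameters V E r2 r3)"

lemma P_from_prod:
  assumes "gp (V :: (nat \<times> nat) set) E r2 r3"
  shows "P r2 r3"
proof -
  have "gp (prod_encode ` V) (iE prod_encode V E) r2 r3"
    using gp_iso[OF assms] inj_on_subset[OF inj_prod_encode] by blast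
  thus ?thesis unfolding P_def hp_gp by blast
qed

lemma K1: "gp {0::nat} (\<lambda>_ _. False) 0 0"
proof -
  have "{T \<in> tri {0::nat} (\<lambda>_ _. False). 0 \<in> T} = {}"
    by (auto simp: tri_def dest: card_mono[of "{0::nat}", simplified])
  hence c: "card {T \<in> tri {0::nat} (\<lambda>_ _. False). 0 \<in> T} = 0" by (metis card.empty)
  thus ?thesis by (simp add: gp_def sg_def nbr_def)
qed

lemma K2: "gp {0::nat,1} (\<lambda>u v. u \<noteq> v \<and> u \<in> {0,1} \<and> v \<in> {0,1}) 1 0"
proof -
  have "tri {0::nat,1} (\<lambda>u v. u \<noteq> v \<and> u \<in> {0,1} \<and> v \<in> {0,1}) = {}"
  proof -
    { fix T :: "nat set" assume "T \<subseteq> {0,1}" "card T = 3"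
      hence False using card_mono[of "{0::nat,1}" T] by simp }
    thus ?thesis by (auto simp: tri_def)
  qed
  moreover have "nbr {0::nat,1} (\<lambda>u v. u \<noteq> v \<and> u \<in> {0,1} \<and> v \<in> {0,1}) 0 = {1}"
    by (auto simp: nbr_def)
  moreover have "nbr {0::nat,1} (\<lambda>u v. u \<noteq> v \<and> u \<in> {0,1} \<and> v \<in> {0,1}) 1 = {0}"
    by (auto simp: nbr_def)
  ultimately show ?thesis by (simp add: gp_def sg_def)
qed

lemma K3: "gp {0::nat,1,2} (\<lambda>u v. u \<noteq> v \<and> u \<in> {0,1,2} \<and> v \<in> {0,1,2}) 2 1"
proof -
  let ?E = "\<lambda>u v. u \<noteq> v \<and> u \<in> {0::nat,1,2} \<and> v \<in> {0,1,2}"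
  have a: "T = {0,1,2}" if "T \<in> tri {0::nat,1,2} ?E" for T
  proof -
    have "T \<subseteq> {0,1,2}" "card T = 3" using that by (simp_all add: tri_def)
    thus ?thesis using card_subset_eq[of "{0::nat,1,2}" T] by simp
  qed
  have b: "{0::nat,1,2} \<in> tri {0::nat,1,2} ?E" unfolding tri_def by simp
  have c: "{T \<in> tri {0::nat,1,2} ?E. v \<in> T} = {{0,1,2}}" if "v \<in> {0,1,2}" for v
    using a b that by blast
  have d: "card {T \<in> tri {0::nat,1,2} ?E. v \<in> T} = 1" if "v \<in> {0,1,2}" for v
    unfolding c[OF that] by simp
  have e: "card (nbr {0::nat,1,2} ?E v) = 2" if "v \<in> {0,1,2}" for v
  proof -
    have "nbr {0::nat,1,2} ?E 0 = {1,2}" "nbr {0::nat,1,2} ?E 1 = {0,2}"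
      "nbr {0::nat,1,2} ?E 2 = {0,1}"
      by (auto simp: nbr_def)
    thus ?thesis using that by auto
  qed
  have f: "sg {0::nat,1,2} ?E" unfolding sg_def by auto
  show ?thesis unfolding gp_def using d e f by blast
qed

lemma P_mono: "P r2 r3 \<Longrightarrow> P (Suc r2) r3"
proof -
  assume "P r2 r3"
  then obtain V :: "nat set" and E where "gp V E r2 r3" unfolding P_def hp_gp by blast
  from P_from_prod[OF gp_prod[OF this K2]] show ?thesis by simp
qed

lemma P_ex: "\<exists>r2. P r2 r3"
proof (induction r3)
  case 0
  show ?case using K1 unfolding P_def hp_gp by blast
next
  case (Suc r3)
  then obtain r2 and V :: "nat set" and E where "gp V E r2 r3" unfolding P_def hp_gp by blast
  from P_from_prod[OF gp_prod[OF this K3]] show ?case by auto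
qed

theorem corollary4p3:
  fixes r3 :: nat
  shows "\<exists>r2s :: nat.
     (\<forall>r2 \<ge> r2s. \<exists>V E. has_parameters V E r2 r3) \<and>
     (\<forall>r2 < r2s. \<not> (\<exists>V E. has_parameters V E r2 r3))"
proof -
  let ?m = "LEAST r2. P r2 r3"
  have Pm: "P ?m r3" using P_ex by (rule LeastI_ex)
  have A: "\<forall>r2 \<ge> ?m. \<exists>V E. has_parameters V E r2 r3"
  proof (intro allI impI)
    fix r2 :: nat assume "r2 \<ge> ?m"
    hence "P r2 r3"
    proof (induction rule: dec_induct)
      case base show ?case by (rule Pm)
    next
      case (step n) thus ?case by (blast intro: P_mono)
    qed
    thus "\<exists>V E. has_parameters V E r2 r3" by (simp add: P_def)
  qed
  have B: "\<forall>r2 < ?m. \<not> (\<exists>V E. has_parameters V E r2 r3)"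
    using not_less_Least unfolding P_def by blast
  show ?thesis using A B by blast
qed

end
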